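(* For every integer $t\ge2$, $$-\frac{71}{100t}<\frac{S_3(t)}{\binom{-3/2}{t}}+\frac{(-1)^t}{\binom{-3/2}{t}}\alpha\sinh\alpha+1-\cosh\alpha<\frac{12}{25t}.$$
   Context: $\alpha=\pi/6$. $(a)_m=a(a+1)\cdots(a+m-1)$ is the rising factorial ($(a)_0=1$); $\binom{x}{m}=x(x-1)\cdots(x-m+1)/m!$ for $m\ge1$, $\binom{x}{0}=1$. For $t\ge2$, $$S_3(t)=\sum_{s=1}^t\frac{(1/2-s)_{s+1}\binom{-3/2}{t-s}}{s}\sum_{u=1}^s\frac{(-1)^u(-s)_u}{(s+u)!\,(2u-1)!}\left(\frac{\pi^2}{36}\right)^u.$$ *)

theory Defs
  imports Complex_Main
begin

definition alpha :: real where "alpha = pi / 6"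

definition S3 :: "nat \<Rightarrow> real" where
  "S3 t = (\<Sum>s=1..t. pochhammer (1/2 - real s) (s + 1) * ((-3/2::real) gchoose (t - s)) / real s
      * (\<Sum>u=1..s. (-1)^u * pochhammer (- real s) u / (fact (s + u) * fact (2*u - 1))
          * (pi^2 / 36)^u))"

end

theory Submission
  imports Defs "HOL-Computational_Algebra.Formal_Power_Series" "HOL-Analysis.Complex_Transcendental"
begin
unbundle fps_syntax

definition Bm :: "real \<Rightarrow> real fps" where
  "Bm c = Abs_fps (\<lambda>n. (c gchoose n) * (-1)^n)"

lemma Bm_nth: "Bm c $ n = (c gchoose n) * (-1)^n"
  by (simp add: Bm_def)

lemma Bm_mult: "Bm a * Bm b = Bm (a + b)"
proof (rule fps_ext)
  fix n
  have "(Bm a * Bm b) $ n = (\<Sum>i=0..n. (a gchoose i) * (-1)^i * ((b gchoose (n - i)) * (-1)^(n-i)))"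
    by (simp add: fps_mult_nth Bm_nth)
  also have "\<dots> = (\<Sum>i=0..n. (a gchoose i) * (b gchoose (n - i)) * (-1)^n)"
  proof (rule sum.cong)
    fix i assume "i \<in> {0..n}"
    then have "(-1::real)^i * (-1)^(n-i) = (-1)^n" by (simp add: power_add[symmetric])
    then show "(a gchoose i) * (-1)^i * ((b gchoose (n - i)) * (-1)^(n-i)) = (a gchoose i) * (b gchoose (n - i)) * (-1)^n"
      by (metis (no_types, lifting) mult.commute mult.left_commute)
  qed simp
  also have "\<dots> = ((a+b) gchoose n) * (-1)^n"
    by (simp add: sum_distrib_right[symmetric] gbinomial_Vandermonde)
  finally show "(Bm a * Bm b) $ n = Bm (a + b) $ n" by (simp add: Bm_nth)
qed

lemma Bm_0: "Bm 0 = 1"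
  by (rule fps_ext) (simp add: Bm_nth gbinomial_0_left)

lemma Bm_1: "Bm 1 = 1 - fps_X"
proof (rule fps_ext)
  fix n
  show "Bm 1 $ n = (1 - fps_X) $ n"
  proof (cases n)
    case 0 then show ?thesis by (simp add: Bm_nth)
  next
    case (Suc m) then show ?thesis
      using binomial_gbinomial[of 1 n, where 'a=real] by (cases m) (auto simp: Bm_nth)
  qed
qed

lemma Bm_minus1_nth: "Bm (-1) $ n = 1"
proof -
  have "((-1::real) gchoose n) = (-1)^n * ((1 + of_nat n - 1) gchoose n)"
    using gbinomial_minus[of "1::real" n] by simp
  also have "\<dots> = (-1)^n" by (simp add: gbinomial_of_nat_symmetric)
  finally show ?thesis by (simp add: Bm_nth power_mult_distrib[symmetric])
qed

lemma Bm_nat_nth: "n > k \<Longrightarrow> Bm (real k) $ n = 0"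
  using binomial_gbinomial[of k n, where 'a=real] by (simp add: Bm_nth binomial_eq_0)

definition VV :: "real fps" where "VV = Bm (1/2)"

lemma VV_pow: "VV ^ j = Bm (real j / 2)"
proof (induction j)
  case 0 then show ?case by (simp add: Bm_0)
next
  case (Suc j)
  have "VV ^ Suc j = Bm (1/2) * Bm (real j / 2)" using Suc by (simp add: VV_def)
  also have "\<dots> = Bm (real (Suc j) / 2)" by (simp add: Bm_mult add_divide_distrib)
  finally show ?case .
qed

lemma VV_sq: "VV^2 = 1 - fps_X"
  using VV_pow[of 2] by (simp add: Bm_1)

definition afun :: "nat \<Rightarrow> nat \<Rightarrow> real" where
  "afun u n = (if u = 0 then (if n = 0 then 1 else 0) else if n < 2* u then 0 else
     2 * real u * fact (2* n-2* u-1) / (fact (n-2* u) * fact n * 4^(n-u)))"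

lemma fact2: "(fact (k+2) :: real) = fact k * (real k + 1) * (real k + 2)"
  by (simp add: fact_Suc[of "Suc k"] algebra_simps numeral_2_eq_2)
lemma fact1: "(fact (k+1) :: real) = fact k * (real k + 1)"
  by (simp add: algebra_simps)

lemma fact2': "k = j + 2 \<Longrightarrow> (fact k::real) = fact j * (real j+1)*(real j+2)"
  by (simp only: fact2)
lemma fact1': "k = j + 1 \<Longrightarrow> (fact k::real) = fact j * (real j+1)"
  by (simp only: fact1)

lemma afun_gen: "u \<ge> 1 \<Longrightarrow> afun u (m + 2* u) = 2 * real u * fact (2* m+2* u-1) / (fact m * fact (m+2* u) * 4^(m+u))"
proof -
  assume u: "u \<ge> 1"
  have "2*(m+2* u)-2* u-1 = 2* m+2* u-1" "m+2* u-2* u = m" "m+2* u-u = m+u" by auto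
  then show ?thesis using u unfolding afun_def by simp
qed

lemma afun_rec_gen:
  fixes m u :: nat
  shows "afun (u+2) (m+2* u+4) = 4* afun (u+1) (m+2* u+4) - 2* afun (u+1) (m+2* u+3) - afun u (m+2* u+2)"
proof -
  define F :: real where "F = fact (2* m+2* u+3)"
  define G :: real where "G = fact (m+2* u+2)"
  define H :: real where "H = fact m"
  define P :: real where "P = 4^(m+u+2)"
  have pos: "F > 0" "G > 0" "H > 0" "P > 0" by (auto simp: F_def G_def H_def P_def)
  have f1: "(fact (2* m+2* u+5)::real) = F * (2* real m+2* real u+4)*(2* real m+2* real u+5)"
  proof -
    have "(fact (2* m+2* u+5)::real) = F * (real (2* m+2* u+3)+1)*(real (2* m+2* u+3)+2)" unfolding F_def by (rule fact2') simp
    then show ?thesis by (simp add: algebra_simps)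
  qed
  have f2: "(fact (m+2* u+4)::real) = G * (real m+2* real u+3)*(real m+2* real u+4)"
  proof -
    have "(fact (m+2* u+4)::real) = G * (real (m+2* u+2)+1)*(real (m+2* u+2)+2)" unfolding G_def by (rule fact2') simp
    then show ?thesis by (simp add: algebra_simps)
  qed
  have f3: "(fact (m+2* u+3)::real) = G * (real m+2* real u+3)"
  proof -
    have "(fact (m+2* u+3)::real) = G * (real (m+2* u+2)+1)" unfolding G_def by (rule fact1') simp
    then show ?thesis by (simp add: algebra_simps)
  qed
  have f4: "(fact (m+2)::real) = H * (real m+1)*(real m+2)"
  proof -
    have "(fact (m+2)::real) = H * (real (m)+1)*(real (m)+2)" unfolding H_def by (rule fact2') simp
    then show ?thesis by (simp add: algebra_simps)
  qed
  have f5: "(fact (m+1)::real) = H * (real m+1)"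
  proof -
    have "(fact (m+1)::real) = H * (real (m)+1)" unfolding H_def by (rule fact1') simp
    then show ?thesis by (simp add: algebra_simps)
  qed
  have p1: "(4::real)^(m+(u+2)) = P" "(4::real)^((m+2)+(u+1)) = 4* P" "(4::real)^((m+1)+(u+1)) = P"
     "(4::real)^((m+2)+u) = P" by (simp_all add: P_def power_add)
  have e1: "afun (u+2) (m+2* u+4) = 2* real(u+2)* F / (H * (G*(real m+2* real u+3)*(real m+2* real u+4)) * P)"
  proof -
    have h: "afun (u+2) (m+2*(u+2)) = 2 * real (u+2) * fact (2* m+2*(u+2)-1) / (fact m * fact (m+2*(u+2)) * 4^(m+(u+2)))"
      by (rule afun_gen) simp
    have q: "m+2*(u+2) = m+2* u+4" "2* m+2*(u+2)-1 = 2* m+2* u+3" by auto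
    show ?thesis using h unfolding q f2 p1 F_def[symmetric] H_def[symmetric] .
  qed
  have e2: "afun (u+1) (m+2* u+4) = 2* real(u+1)*(F*(2* real m+2* real u+4)*(2* real m+2* real u+5)) /
         ((H*(real m+1)*(real m+2)) * (G*(real m+2* real u+3)*(real m+2* real u+4)) * (4* P))"
  proof -
    have h: "afun (u+1) ((m+2)+2*(u+1)) = 2 * real (u+1) * fact (2*(m+2)+2*(u+1)-1) / (fact (m+2) * fact ((m+2)+2*(u+1)) * 4^((m+2)+(u+1)))"
      by (rule afun_gen) simp
    have q: "(m+2)+2*(u+1) = m+2* u+4" "2*(m+2)+2*(u+1)-1 = 2* m+2* u+5" by auto
    show ?thesis using h unfolding q f1 f2 f4 p1 .
  qed
  have e3: "afun (u+1) (m+2* u+3) = 2* real(u+1)* F / ((H*(real m+1)) * (G*(real m+2* real u+3)) * P)"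
  proof -
    have h: "afun (u+1) ((m+1)+2*(u+1)) = 2 * real (u+1) * fact (2*(m+1)+2*(u+1)-1) / (fact (m+1) * fact ((m+1)+2*(u+1)) * 4^((m+1)+(u+1)))"
      by (rule afun_gen) simp
    have q: "(m+1)+2*(u+1) = m+2* u+3" "2*(m+1)+2*(u+1)-1 = 2* m+2* u+3" by auto
    show ?thesis using h unfolding q f3 f5 p1 F_def[symmetric] .
  qed
  have e4: "afun u (m+2* u+2) = 2* real u* F / ((H*(real m+1)*(real m+2)) * G * P)"
  proof (cases "u = 0")
    case True then show ?thesis by (simp add: afun_def)
  next
    case False
    have h: "afun u ((m+2)+2* u) = 2 * real u * fact (2*(m+2)+2* u-1) / (fact (m+2) * fact ((m+2)+2* u) * 4^((m+2)+u))"
      by (rule afun_gen) (use False in simp)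
    have q: "(m+2)+2* u = m+2* u+2" "2*(m+2)+2* u-1 = 2* m+2* u+3" by auto
    show ?thesis using h unfolding q f4 p1 F_def[symmetric] G_def[symmetric] .
  qed
  have pp: "real m + 1 \<noteq> 0" "real m + 2 \<noteq> 0" "real m+2* real u+3 \<noteq> 0" "real m+2* real u+4 \<noteq> 0"
    "F \<noteq> 0" "G \<noteq> 0" "H \<noteq> 0" "P \<noteq> 0" using pos by auto
  show ?thesis unfolding e1 e2 e3 e4 using pp
    by (simp add: divide_simps) (simp add: algebra_simps)
qed

lemma afun_diag: "u \<ge> 1 \<Longrightarrow> afun u (2* u) = 1/4^u"
proof -
  assume u: "u \<ge> 1"
  have h: "afun u (0+2* u) = 2 * real u * fact (2*0+2* u-1) / (fact 0 * fact (0+2* u) * 4^(0+u))"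
    by (rule afun_gen) (use u in simp)
  have f: "(fact (2* u)::real) = fact (2* u-1) * (real (2* u-1) + 1)" by (rule fact1') (use u in simp)
  have "real (2* u-1) + 1 = 2 * real u" using u by (simp add: of_nat_diff)
  then show ?thesis using h f by (simp add: field_simps)
qed

lemma afun_diag1: "u \<ge> 1 \<Longrightarrow> afun u (2* u+1) = 2* real u/4^(u+1)"
proof -
  assume u: "u \<ge> 1"
  have h: "afun u (1+2* u) = 2 * real u * fact (2*1+2* u-1) / (fact 1 * fact (1+2* u) * 4^(1+u))"
    by (rule afun_gen) (use u in simp)
  have q: "1+2* u = 2* u+1" "2*1+2* u-1 = 2* u+1" "1+u = u+1" by auto
  define F where "F = (fact (2* u+1)::real)"
  have "F \<noteq> 0" unfolding F_def by simp
  then show ?thesis using h unfolding q F_def[symmetric] by (simp add: field_simps)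
qed

lemma afun_small: "n < 2* u \<Longrightarrow> afun u n = 0"
  by (simp add: afun_def)

lemma afun_rec:
  "afun (u+2) n = 4* afun (u+1) n - (if n = 0 then 0 else 2* afun (u+1) (n-1)) - (if n < 2 then 0 else afun u (n-2))"
proof -
  consider "n < 2* u+2" | "n = 2* u+2" | "n = 2* u+3" | "n \<ge> 2* u+4"
    by linarith
  then show ?thesis
  proof cases
    case 1
    have a: "afun (u+2) n = 0" "afun (u+1) n = 0" "afun (u+1) (n-1) = 0" using 1 by (simp_all add: afun_small)
    have b: "n \<ge> 2 \<Longrightarrow> afun u (n-2) = 0" using 1 by (intro afun_small) linarith
    show ?thesis using a b by auto
  next
    case 2
    have a: "afun (u+1) n = 1/4^(u+1)" using 2 afun_diag[of "u+1"] by (simp add: algebra_simps)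
    have a1: "afun (u+1) (n-1) = 0" "afun (u+2) n = 0" using 2 by (simp_all add: afun_small)
    have b: "afun u (n-2) = 1/4^u" using 2 afun_diag[of u]
      by (cases "u=0") (simp_all add: afun_def)
    show ?thesis using 2 a a1 b by simp
  next
    case 3
    have e: "n = 2*(u+1)+1" using 3 by simp
    have a: "afun (u+1) n = 2*(real u+1)/4^(u+2)" unfolding e using afun_diag1[of "u+1"] by (simp add: algebra_simps)
    have a2: "afun (u+1) (n-1) = 1/4^(u+1)" using 3 afun_diag[of "u+1"] by (simp add: algebra_simps)
    have a3: "afun (u+2) n = 0" using 3 by (simp add: afun_small)
    have b: "afun u (n-2) = 2* real u/4^(u+1)" using 3 afun_diag1[of u]
      by (cases "u=0") (simp_all add: afun_def)
    show ?thesis unfolding a a2 a3 b using 3 by (simp add: field_simps)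
  next
    case 4
    define m where "m = n - (2* u+4)"
    have 4: "n = m+2* u+4" using 4 unfolding m_def by simp
    have q: "n - 1 = m+2* u+3" "n-2 = m+2* u+2" using 4 by auto
    show ?thesis using afun_rec_gen[of u m] 4 unfolding q by simp
  qed
qed

lemma gch_step: "((a::real) gchoose Suc k) = (a - real k) * (a gchoose k) / (real k + 1)"
  using gbinomial_mult_1[of a k] by (simp add: field_simps)

lemma half_gchoose: "((1/2::real) gchoose (k+2))*(-1)^(k+2) = - fact(2* k+1)/(fact k * fact(k+2) * 4^(k+1))"
proof (induction k)
  case 0
  have "((1/2::real) gchoose 2) = -1/8"
    using gch_step[of "1/2" 1] gch_step[of "1/2" 0] by (simp add: numeral_2_eq_2)
  then show ?case by (simp add: numeral_2_eq_2)
next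
  case (Suc k)
  have st: "((1/2::real) gchoose (Suc k + 2)) = (1/2 - real (k+2)) * ((1/2) gchoose (k+2)) / (real (k+2) + 1)"
    using gch_step[of "1/2" "k+2"] by simp
  have f1: "(fact (2* Suc k+1)::real) = fact (2* k+1) * (real (2* k+1)+1) * (real (2* k+1)+2)"
    by (rule fact2') simp
  have f2: "(fact (Suc k + 2)::real) = fact (k+2) * (real (k+2)+1)"
    by (rule fact1') simp
  have f3: "(fact (Suc k)::real) = fact k * (real k+1)"
    by (rule fact1') simp
  define A where "A = (1/2::real) gchoose (k+2)"
  define F1 where "F1 = (fact (2* k+1)::real)"
  define F2 where "F2 = (fact (k+2)::real)"
  define F3 where "F3 = (fact k::real)"
  have pos: "F1 \<noteq> 0" "F2 \<noteq> 0" "F3 \<noteq> 0" unfolding F1_def F2_def F3_def by auto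
  have IH: "A * (-1)^k = - F1 / (F3 * F2 * 4^(k+1))" using Suc.IH unfolding A_def F1_def F2_def F3_def by simp
  show ?case unfolding st f1 f2 f3 A_def[symmetric] F1_def[symmetric] F2_def[symmetric] F3_def[symmetric]
  proof -
    have m1: "(-1::real)^(Suc k+2) = - ((-1)^k)" by simp
    have "(1 / 2 - real (k + 2)) * A / (real (k + 2) + 1) * (- 1) ^ (Suc k + 2)
        = - (1 / 2 - real (k + 2)) * (A * (-1)^k) / (real (k + 2) + 1)" unfolding m1 by (simp add: field_simps)
    also have "\<dots> = - (1 / 2 - real (k + 2)) * (- F1 / (F3 * F2 * 4^(k+1))) / (real (k + 2) + 1)" unfolding IH ..
    also have "\<dots> = - (F1 * (real (2 * k + 1) + 1) * (real (2 * k + 1) + 2)) / (F3 * (real k + 1) * (F2 * (real (k + 2) + 1)) * 4 ^ (Suc k + 1))"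
      using pos by (simp add: divide_simps) (simp add: algebra_simps)
    finally show "(1 / 2 - real (k + 2)) * A / (real (k + 2) + 1) * (- 1) ^ (Suc k + 2) =
      - (F1 * (real (2 * k + 1) + 1) * (real (2 * k + 1) + 2)) / (F3 * (real k + 1) * (F2 * (real (k + 2) + 1)) * 4 ^ (Suc k + 1))" .
  qed
qed

definition YY :: "real fps" where "YY = (1 - VV)^2"

lemma YY_eq: "YY = 2 - fps_X - 2* VV"
proof -
  have "YY = 1 - 2* VV + VV^2" unfolding YY_def by (simp add: power2_eq_square algebra_simps)
  then show ?thesis by (simp add: VV_sq algebra_simps)
qed

lemma YY_sq: "YY^2 = 2*(2 - fps_X)* YY - fps_X^2"
proof -
  have "YY^2 - (2*(2 - fps_X)* YY - fps_X^2) = 4*(VV^2 - (1 - fps_X))"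
    unfolding YY_eq by (simp add: power2_eq_square algebra_simps)
  then show ?thesis by (simp add: VV_sq)
qed

lemma YY_nth: "YY $ n = afun 1 n"
proof -
  consider "n = 0" | "n = 1" | k where "n = k+2"
    by (metis One_nat_def add_2_eq_Suc' not0_implies_Suc)
  then show ?thesis
  proof cases
    case 1 then show ?thesis by (simp add: YY_eq VV_def Bm_nth afun_def)
  next
    case 2 then show ?thesis by (simp add: YY_eq VV_def Bm_nth afun_def)
  next
    case 3
    have "YY $ n = - 2 * (((1/2::real) gchoose (k+2))*(-1)^(k+2))"
      using 3 by (simp add: YY_eq VV_def Bm_nth fps_numeral_nth numeral_fps_const)
    also have "\<dots> = 2 * fact(2* k+1)/(fact k * fact(k+2) * 4^(k+1))"
      unfolding half_gchoose by simp
    also have "\<dots> = afun 1 n"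
    proof -
      have "afun 1 (k+2*1) = 2 * real 1 * fact (2* k+2*1-1) / (fact k * fact (k+2*1) * 4^(k+1))"
        by (rule afun_gen) simp
      moreover have "k+2*1 = n" "2* k+2*1-1 = 2* k+1" using 3 by auto
      ultimately show ?thesis using 3 by simp
    qed
    finally show ?thesis .
  qed
qed

lemma YY_pow_nth: "(YY^u) $ n = afun u n"
proof -
  have "\<forall>n. (YY^u) $ n = afun u n \<and> (YY^(u+1)) $ n = afun (u+1) n"
  proof (induction u)
    case 0
    show ?case by (simp add: afun_def YY_nth)
  next
    case (Suc u)
    have "YY^(u+2) = YY^u * YY^2" by (rule power_add)
    also have "\<dots> = fps_const 4* YY^(u+1) - fps_const 2*(fps_X * YY^(u+1)) - fps_X^2 * YY^u"
      unfolding YY_sq by (simp add: algebra_simps power_Suc numeral_fps_const)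
    finally have e: "YY^(u+2) = \<dots>" .
    have "\<forall>n. (YY^(u+2)) $ n = afun (u+2) n"
    proof
      fix n
      show "(YY^(u+2)) $ n = afun (u+2) n"
      proof -
        have h1: "(YY^(u+1)) $ n = afun (u+1) n" "(YY^(u+1)) $ (n-1) = afun (u+1) (n-1)"
          "(YY^u) $ (n-2) = afun u (n-2)" using Suc.IH by blast+
        show ?thesis
          unfolding e afun_rec fps_sub_nth fps_mult_left_const_nth fps_X_power_mult_nth fps_X_mult_nth h1
          by simp
      qed
    qed
    then show ?case using Suc.IH by simp
  qed
  then show ?thesis by simp
qed

definition qq :: "nat \<Rightarrow> real" where "qq m = ((-3/2) gchoose m) * (-1)^m"
definition Qf :: "nat \<Rightarrow> nat \<Rightarrow> nat \<Rightarrow> real" where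
  "Qf u t i = ((real i - 3/2) gchoose (t+u)) * (-1)^(t+u)"
definition LL :: "nat \<Rightarrow> nat \<Rightarrow> real" where
  "LL u t = (\<Sum>i=0..u. real (2* u choose (2* i)) * Qf u t i) - 2 * real u"

lemma sum_even_odd: "sum f {..2*(u::nat)} = sum (\<lambda>i. f (2* i)) {..u} + sum (\<lambda>i. f (2* i+1)) {..<u}"
proof (induction u)
  case 0 then show ?case by simp
next
  case (Suc u)
  have "{..2 * Suc u} = insert (2* u+2) (insert (2* u+1) {..2* u})" by auto
  then have "sum f {..2 * Suc u} = f (2* u+2) + f (2* u+1) + sum f {..2* u}" by (simp add: add.assoc)
  then show ?case using Suc by (simp add: add_ac)
qed

lemma YY_pow_alt: "YY^u = (1 - VV)^(2* u)"
  unfolding YY_def by (simp add: power_mult)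

lemma conv_lhs: "(YY^u * Bm (-3/2)) $ (t+u) = (\<Sum>s=u..t. afun u (s+u) * qq (t-s))"
proof -
  have "(YY^u * Bm (-3/2)) $ (t+u) = (\<Sum>n=0..t+u. afun u n * qq (t+u-n))"
    by (simp add: fps_mult_nth YY_pow_nth Bm_nth qq_def)
  also have "\<dots> = (\<Sum>n=u+u..t+u. afun u n * qq (t+u-n))"
    by (rule sum.mono_neutral_right) (auto simp: afun_small)
  also have "\<dots> = (\<Sum>s=u..t. afun u (s+u) * qq (t+u-(s+u)))"
    by (rule sum.shift_bounds_cl_nat_ivl)
  also have "\<dots> = (\<Sum>s=u..t. afun u (s+u) * qq (t-s))" by simp
  finally show ?thesis .
qed

lemma sign_nth: "(((-1::real fps)^k) * g) $ n = (-1)^k * g $ n"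
  by (cases "even k") simp_all

lemma ofnat_nth: "((of_nat c :: real fps) * g) $ n = real c * g $ n"
  by (simp add: fps_of_nat[symmetric])

lemma conv_rhs: "(YY^u * Bm (-3/2)) $ (t+u) = LL u t"
proof -
  have bin: "(1 - VV)^(2* u) = (\<Sum>k\<le>2* u. of_nat (2* u choose k) * (- VV)^k * 1^(2* u-k))"
    using binomial_ring[of "- VV" 1 "2* u"] by simp
  have tm: "\<And>k. of_nat (2* u choose k) * (- VV)^k * 1^(2* u-k) * Bm(-3/2) = of_nat (2* u choose k) * ((-1)^k * Bm (real k / 2 - 3/2))"
  proof -
    fix k
    have a: "(- VV)^k = (-1)^k * VV^k" by (rule power_minus)
    have b: "VV^k * Bm(-3/2) = Bm (real k / 2 - 3/2)" unfolding VV_pow Bm_mult by simp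
    show "of_nat (2* u choose k) * (- VV)^k * 1^(2* u-k) * Bm(-3/2) = of_nat (2* u choose k) * ((-1)^k * Bm (real k / 2 - 3/2))"
      unfolding a b[symmetric] by (simp add: mult.assoc)
  qed
  have "YY^u * Bm (-3/2) = (\<Sum>k\<le>2* u. of_nat (2* u choose k) * (- VV)^k * 1^(2* u-k) * Bm (-3/2))"
    unfolding YY_pow_alt bin by (rule sum_distrib_right)
  also have "\<dots> = (\<Sum>k\<le>2* u. of_nat (2* u choose k) * ((-1)^k * Bm (real k / 2 - 3/2)))"
    by (rule sum.cong[OF refl]) (rule tm)
  finally have "YY^u * Bm (-3/2) = (\<Sum>k\<le>2* u. of_nat (2* u choose k) * ((-1)^k * Bm (real k / 2 - 3/2)))" .
  then have "(YY^u * Bm (-3/2)) $ (t+u) = (\<Sum>k\<le>2* u. real (2* u choose k) * ((-1)^k * Bm (real k / 2 - 3/2) $ (t+u)))"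
    by (simp only: fps_sum_nth ofnat_nth sign_nth)
  also have "\<dots> = (\<Sum>k\<le>2* u. real (2* u choose k) * (-1)^k * Bm (real k / 2 - 3/2) $ (t+u))"
    by (simp add: mult.assoc)
  also have "\<dots> = (\<Sum>i\<le>u. real (2* u choose (2* i)) * Qf u t i) + (\<Sum>i<u. - real (2* u choose (2* i+1)) * Bm (real i - 1) $ (t+u))"
    unfolding sum_even_odd
  proof (intro arg_cong2[where f="(+)"] sum.cong refl)
    fix i assume "i \<in> {..u}"
    show "real (2* u choose (2* i)) * (-1)^(2* i) * Bm (real (2* i) / 2 - 3/2) $ (t+u) = real (2* u choose (2* i)) * Qf u t i"
      by (simp add: Qf_def Bm_nth)
  next
    fix i assume "i \<in> {..<u}"
    have "real (2* i+1) / 2 - 3/2 = real i - 1" by (simp add: field_simps)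
    then show "real (2* u choose (2* i+1)) * (-1)^(2* i+1) * Bm (real (2* i+1) / 2 - 3/2) $ (t+u) = - real (2* u choose (2* i+1)) * Bm (real i - 1) $ (t+u)"
      by simp
  qed
  also have "(\<Sum>i<u. - real (2* u choose (2* i+1)) * Bm (real i - 1) $ (t+u)) = - 2 * real u"
  proof (cases u)
    case 0 then show ?thesis by simp
  next
    case (Suc v)
    define g where "g = (\<lambda>i. - real (2* u choose (2* i+1)) * Bm (real i - 1) $ (t+u))"
    have e: "{..<u} = insert 0 {1..<u}" using Suc by auto
    have s1: "sum g {..<u} = g 0 + sum g {1..<u}" unfolding e by (simp add: sum.insert)
    have s2: "sum g {1..<u} = 0"
    proof (rule sum.neutral, rule ballI)
      fix i assume i: "i \<in> {1..<u}"
      then have eq: "real i - 1 = real (i - 1)" by (simp add: of_nat_diff)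
      have lt: "t + u > i - 1" using i by auto
      have "Bm (real i - 1) $ (t+u) = 0" unfolding eq using lt by (rule Bm_nat_nth)
      then show "g i = 0" unfolding g_def by simp
    qed
    have s3: "g 0 = - 2 * real u" unfolding g_def using Bm_minus1_nth[of "t+u"] by simp
    show ?thesis using s1 s2 s3 unfolding g_def by simp
  qed
  finally show ?thesis unfolding LL_def by (simp add: atMost_atLeast0)
qed

lemma conv_identity: "(\<Sum>s=u..t. afun u (s+u) * qq (t-s)) = LL u t"
  using conv_lhs conv_rhs by simp

lemma poch_neg_nat: "u \<le> s \<Longrightarrow> (-1)^u * pochhammer (- real s) u = fact s / fact (s - u)"
proof -
  assume us: "u \<le> s"
  have "pochhammer (- real s) u = (-1)^u * pochhammer (real s - real u + 1) u"
    by (rule pochhammer_minus)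
  moreover have "pochhammer (real s - real u + 1) u = fact s / fact (s - u)"
  proof -
    have "(real s gchoose u) = pochhammer (real s - real u + 1) u / fact u"
      by (rule gbinomial_pochhammer')
    moreover have "(real s gchoose u) = fact s / (fact u * fact (s - u))"
      using binomial_fact[OF us, where 'a=real] binomial_gbinomial[of s u, where 'a=real] by simp
    ultimately show ?thesis by (simp add: field_simps)
  qed
  ultimately show ?thesis by (simp add: power_mult_distrib[symmetric])
qed

lemma poch_half: "pochhammer (1/2 - real s) (s+1) = (-1)^s * (1/2) * (fact (2* s) / (4^s * fact s))"
proof -
  have "pochhammer (- (real s - 1/2)) (Suc s) = (-1)^(Suc s) * pochhammer (real s - 1/2 - real (Suc s) + 1) (Suc s)"
    by (rule pochhammer_minus)
  also have "real s - 1/2 - real (Suc s) + 1 = (-1/2::real)" by simp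
  also have "pochhammer (-1/2::real) (Suc s) = (-1/2) * pochhammer (1/2) s"
    by (simp add: pochhammer_rec)
  also have "pochhammer (1/2::real) s = fact (2* s) / (4^s * fact s)"
  proof -
    have fd: "(fact (2* s)::real) = 2^(2* s) * pochhammer (1/2) s * fact s" by (rule fact_double)
    have "(2::real)^(2* s) = 4^s" by (simp add: power_mult)
    then have "(fact (2* s)::real) = 4^s * pochhammer (1/2) s * fact s" using fd by simp
    then show ?thesis by (simp add: field_simps)
  qed
  finally have "pochhammer (1/2 - real s) (Suc s) = (- 1) ^ Suc s * (- 1 / 2 * (fact (2 * s) / (4 ^ s * fact s)))"
    by simp
  then show ?thesis by simp
qed

lemma coefK:
  assumes "1 \<le> u" "u \<le> s"
  shows "pochhammer (1/2 - real s) (s+1) / real s * ((-1)^u * pochhammer (- real s) u / (fact (s+u) * fact (2* u-1)))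
     = (-1)^s * afun u (s+u) / fact (2* u)"
proof -
  have a: "afun u ((s-u) + 2* u) = 2 * real u * fact (2*(s-u)+2* u-1) / (fact (s-u) * fact ((s-u)+2* u) * 4^((s-u)+u))"
    by (rule afun_gen) (use assms in simp)
  have q: "(s-u)+2* u = s+u" "2*(s-u)+2* u-1 = 2* s-1" "(s-u)+u = s" using assms by auto
  have af: "afun u (s+u) = 2 * real u * fact (2* s-1) / (fact (s-u) * fact (s+u) * 4^s)"
    using a unfolding q .
  have f1: "(fact (2* s)::real) = fact (2* s-1) * (2 * real s)"
  proof -
    have "(fact (2* s)::real) = fact (2* s-1) * (real (2* s-1) + 1)" by (rule fact1') (use assms in simp)
    moreover have "real (2* s-1) + 1 = 2 * real s" using assms by (simp add: of_nat_diff)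
    ultimately show ?thesis by simp
  qed
  have f2: "(fact (2* u)::real) = fact (2* u-1) * (2 * real u)"
  proof -
    have "(fact (2* u)::real) = fact (2* u-1) * (real (2* u-1) + 1)" by (rule fact1') (use assms in simp)
    moreover have "real (2* u-1) + 1 = 2 * real u" using assms by (simp add: of_nat_diff)
    ultimately show ?thesis by simp
  qed
  define A where "A = (fact (2* s-1)::real)"
  define B where "B = (fact (2* u-1)::real)"
  define C where "C = (fact s::real)"
  define D where "D = (fact (s-u)::real)"
  define E where "E = (fact (s+u)::real)"
  have nz: "A \<noteq> 0" "B \<noteq> 0" "C \<noteq> 0" "D \<noteq> 0" "E \<noteq> 0" "real s \<noteq> 0" "real u \<noteq> 0" "(4::real)^s \<noteq> 0"
    using assms unfolding A_def B_def C_def D_def E_def by auto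
  have p1: "pochhammer (1/2 - real s) (s+1) = (-1)^s * (1/2) * (A * (2 * real s) / (4^s * C))"
    unfolding A_def C_def f1[symmetric] by (rule poch_half)
  have p2: "(-1)^u * pochhammer (- real s) u = C / D"
    unfolding C_def D_def using assms(2) by (rule poch_neg_nat)
  have lhs: "pochhammer (1/2 - real s) (s+1) / real s * ((-1)^u * pochhammer (- real s) u / (fact (s+u) * fact (2* u-1)))
      = (-1)^s * (1/2) * (A * (2 * real s) / (4^s * C)) / real s * (C / D / (E * B))"
    unfolding p1 p2 E_def[symmetric] B_def[symmetric] by simp
  show ?thesis unfolding lhs unfolding af f2 A_def[symmetric] B_def[symmetric] D_def[symmetric] E_def[symmetric]
    using nz by (simp add: divide_simps)
qed

lemma sum_triangle_swap:
  "(\<Sum>s=1..(t::nat). \<Sum>u=1..s. f s u) = (\<Sum>u=1..t. \<Sum>s=u..t. (f s u :: real))"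
proof (induction t)
  case 0 then show ?case by simp
next
  case (Suc t)
  have "(\<Sum>u=1..Suc t. \<Sum>s=u..Suc t. f s u) = (\<Sum>u=1..Suc t. (\<Sum>s=u..t. f s u) + f (Suc t) u)"
    by (rule sum.cong) auto
  also have "\<dots> = (\<Sum>u=1..Suc t. \<Sum>s=u..t. f s u) + (\<Sum>u=1..Suc t. f (Suc t) u)"
    by (simp add: sum.distrib)
  also have "(\<Sum>u=1..Suc t. \<Sum>s=u..t. f s u) = (\<Sum>u=1..t. \<Sum>s=u..t. f s u)"
    by simp
  finally show ?case using Suc by simp
qed

definition cc :: "nat \<Rightarrow> real" where "cc u = (pi^2/36)^u / fact (2* u)"

lemma S3_eq: "S3 t = (-1)^t * (\<Sum>u=1..t. cc u * LL u t)"
proof -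
  have "S3 t = (\<Sum>s=1..t. \<Sum>u=1..s. (-1)^t * (cc u * (afun u (s+u) * qq (t-s))))"
    unfolding S3_def
  proof (rule sum.cong[OF refl])
    fix s assume s: "s \<in> {1..t}"
    have "pochhammer (1/2 - real s) (s+1) * ((-3/2::real) gchoose (t - s)) / real s
      * (\<Sum>u=1..s. (-1)^u * pochhammer (- real s) u / (fact (s + u) * fact (2* u - 1)) * (pi^2 / 36)^u)
      = (\<Sum>u=1..s. ((-3/2::real) gchoose (t - s)) * (pi^2 / 36)^u *
          (pochhammer (1/2 - real s) (s+1) / real s * ((-1)^u * pochhammer (- real s) u / (fact (s + u) * fact (2* u - 1)))))"
      by (simp add: sum_distrib_left algebra_simps)
    also have "\<dots> = (\<Sum>u=1..s. (-1)^t * (cc u * (afun u (s+u) * qq (t-s))))"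
    proof (rule sum.cong[OF refl])
      fix u assume u: "u \<in> {1..s}"
      have sg: "(-1::real)^s * (-1)^(t-s) = (-1)^t" using s by (simp add: power_add[symmetric])
      have "((-3/2::real) gchoose (t - s)) = (-1)^(t-s) * qq (t-s)"
        unfolding qq_def by (simp add: power_mult_distrib[symmetric] mult.assoc[symmetric])
      then show "((-3/2::real) gchoose (t - s)) * (pi^2 / 36)^u *
          (pochhammer (1/2 - real s) (s+1) / real s * ((-1)^u * pochhammer (- real s) u / (fact (s + u) * fact (2* u - 1))))
          = (-1)^t * (cc u * (afun u (s+u) * qq (t-s)))"
        using coefK[of u s] u sg unfolding cc_def
        by (simp add: field_simps sg[symmetric])
    qed
    finally show "pochhammer (1/2 - real s) (s+1) * ((-3/2::real) gchoose (t - s)) / real s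
      * (\<Sum>u=1..s. (-1)^u * pochhammer (- real s) u / (fact (s + u) * fact (2* u - 1)) * (pi^2 / 36)^u)
      = (\<Sum>u=1..s. (-1)^t * (cc u * (afun u (s+u) * qq (t-s))))" .
  qed
  also have "\<dots> = (\<Sum>u=1..t. \<Sum>s=u..t. (-1)^t * (cc u * (afun u (s+u) * qq (t-s))))"
    by (rule sum_triangle_swap)
  also have "\<dots> = (-1)^t * (\<Sum>u=1..t. cc u * LL u t)"
    by (simp add: sum_distrib_left conv_identity[symmetric])
  finally show ?thesis .
qed

lemma qq_0: "qq 0 = 1" by (simp add: qq_def)

lemma qq_Suc: "qq (Suc m) = qq m * (real m + 3/2) / (real m + 1)"
proof -
  have h: "((-3/2::real) gchoose Suc m) = (-3/2 - real m) * ((-3/2) gchoose m) / (real m + 1)"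
    by (rule gch_step)
  show ?thesis unfolding qq_def h by (simp add: field_simps)
qed

lemma qq_pos: "qq m > 0"
  by (induction m) (simp_all add: qq_0 qq_Suc)

lemma LL_zero: "u > t \<Longrightarrow> LL u t = 0"
  using conv_identity[of u t] by simp

lemma Qf_0: "Qf u t 0 = qq (t+u)"
  by (simp add: Qf_def qq_def)

lemma Qf_step: "Qf u t (Suc i) * (real i - 1/2 - real (t+u)) = (real i - 1/2) * Qf u t i"
proof -
  define Gs where "Gs = ((real i - 1/2) gchoose (t+u))"
  define G where "G = ((real i - 3/2) gchoose (t+u))"
  define c where "c = (-1::real)^(t+u)"
  have "(real i - 1/2 - real (t+u)) * ((real i - 1/2) gchoose (t+u)) = (real i - 1/2) * ((real i - 1/2 - 1) gchoose (t+u))"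
    by (rule gbinomial_absorb_comp)
  moreover have "real i - 1/2 - 1 = real i - 3/2" by simp
  ultimately have eq: "(real i - 1/2 - real (t+u)) * Gs = (real i - 1/2) * G" unfolding Gs_def G_def by simp
  have q1: "Qf u t (Suc i) = Gs * c" unfolding Qf_def Gs_def c_def by simp
  have q2: "Qf u t i = G * c" unfolding Qf_def G_def c_def by simp
  have "Qf u t (Suc i) * (real i - 1/2 - real (t+u)) = c * ((real i - 1/2 - real (t+u)) * Gs)"
    unfolding q1 by (simp add: algebra_simps)
  also have "\<dots> = c * ((real i - 1/2) * G)" unfolding eq ..
  also have "\<dots> = (real i - 1/2) * Qf u t i" unfolding q2 by (simp add: algebra_simps)
  finally show ?thesis .
qed

lemma Qf_bound:
  assumes "1 \<le> i" "i \<le> u" "t \<ge> 1"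
  shows "\<bar>Qf u t i\<bar> \<le> qq (t+u) * fact i / (2 * real t)"
  using assms(1,2)
proof (induction i rule: dec_induct)
  case base
  have "Qf u t 1 * (real 0 - 1/2 - real (t+u)) = (real 0 - 1/2) * Qf u t 0"
    using Qf_step[of u t 0] by simp
  then have e: "Qf u t 1 * (real t + real u + 1/2) = (1/2) * qq (t+u)" unfolding Qf_0 by (simp add: algebra_simps)
  have pos: "real t + real u + 1/2 > 0" by simp
  have "Qf u t 1 = (1/2) * qq (t+u) / (real t + real u + 1/2)" using e pos by (simp add: field_simps)
  moreover have "qq (t+u) > 0" by (rule qq_pos)
  moreover have "(1/2) * qq (t+u) / (real t + real u + 1/2) \<le> qq (t+u) / (2 * real t)"
  proof -
    have "(1/2) * qq (t+u) / (real t + real u + 1/2) = qq (t+u) / (2 * real t + 2 * real u + 1)"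
      by (simp add: field_simps)
    also have "\<dots> \<le> qq (t+u) / (2 * real t)"
      using \<open>qq (t+u) > 0\<close> assms(3) by (intro divide_left_mono) auto
    finally show ?thesis .
  qed
  ultimately show ?case by simp
next
  case (step k)
  have st: "Qf u t (Suc k) * (real k - 1/2 - real (t+u)) = (real k - 1/2) * Qf u t k" by (rule Qf_step)
  have d: "real (t+u) + 1/2 - real k \<ge> 1" using step.hyps assms by simp
  have "\<bar>Qf u t (Suc k)\<bar> * (real (t+u) + 1/2 - real k) = (real k - 1/2) * \<bar>Qf u t k\<bar>"
  proof -
    have "\<bar>Qf u t (Suc k) * (real k - 1/2 - real (t+u))\<bar> = \<bar>(real k - 1/2) * Qf u t k\<bar>" using st by simp
    then have h: "\<bar>Qf u t (Suc k)\<bar> * \<bar>real k - 1/2 - real (t+u)\<bar> = \<bar>real k - 1/2\<bar> * \<bar>Qf u t k\<bar>" by (simp only: abs_mult)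
    have e1: "\<bar>real k - 1/2 - real (t+u)\<bar> = real (t+u) + 1/2 - real k" using d by linarith
    have e2: "\<bar>real k - 1/2\<bar> = real k - 1/2" using step.hyps by simp
    show ?thesis using h unfolding e1 e2 .
  qed
  moreover have "\<bar>Qf u t (Suc k)\<bar> \<le> \<bar>Qf u t (Suc k)\<bar> * (real (t+u) + 1/2 - real k)"
    using mult_left_mono[OF d, of "\<bar>Qf u t (Suc k)\<bar>"] by simp
  ultimately have "\<bar>Qf u t (Suc k)\<bar> \<le> (real k - 1/2) * \<bar>Qf u t k\<bar>" by simp
  also have "\<dots> \<le> (real k + 1) * (qq (t+u) * fact k / (2 * real t))"
    using step.IH step.hyps assms(2) by (intro mult_mono) auto
  also have "\<dots> = qq (t+u) * fact (Suc k) / (2 * real t)" by (simp add: field_simps)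
  finally show ?case .
qed

lemma ratio_bound:
  assumes "t \<ge> 2"
  shows "1 \<le> qq (t+u) / qq t \<and> qq (t+u) / qq t \<le> (5/4)^u \<and> qq (t+u) / qq t - 1 \<le> real u * (5/4)^u / (2 * real t)"
proof (induction u)
  case 0 then show ?case using qq_pos[of t] by simp
next
  case (Suc u)
  define R where "R = qq (t+u) / qq t"
  define a where "a = 1 / (2 * (real (t+u) + 1))"
  have IH: "1 \<le> R" "R \<le> (5/4)^u" "R - 1 \<le> real u * (5/4)^u / (2 * real t)" using Suc unfolding R_def by auto
  have Rs: "qq (t + Suc u) / qq t = R * (1 + a)"
    unfolding R_def a_def using qq_pos[of t] by (simp add: qq_Suc field_simps)
  have a0: "0 < a" "a \<le> 1/4" "a \<le> 1 / (2 * real t)" using assms unfolding a_def by (auto simp: field_simps)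
  have p: "(1::real) \<le> (5/4)^u" by simp
  have "1 \<le> R * (1 + a)" using mult_mono[of 1 R 1 "1+a"] IH a0 by simp
  moreover have "R * (1 + a) \<le> (5/4)^Suc u"
  proof -
    have "R * (1 + a) \<le> (5/4)^u * (5/4)" using IH a0 by (intro mult_mono) auto
    then show ?thesis by simp
  qed
  moreover have "R * (1 + a) - 1 \<le> real (Suc u) * (5/4)^Suc u / (2 * real t)"
  proof -
    have "R * (1 + a) - 1 = (R - 1) * (1 + a) + a" by (simp add: algebra_simps)
    also have "\<dots> \<le> (real u * (5/4)^u / (2 * real t)) * (5/4) + 1 / (2 * real t)"
      using IH a0 by (intro add_mono mult_mono) auto
    also have "\<dots> \<le> (real u * (5/4)^u / (2 * real t)) * (5/4) + (5/4)^Suc u / (2 * real t)"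
    proof -
      have p2: "(1::real) \<le> (5/4)^Suc u" by (rule one_le_power) simp
      show ?thesis using p2 assms by (intro add_mono order_refl divide_right_mono) auto
    qed
    also have "\<dots> = real (Suc u) * (5/4)^Suc u / (2 * real t)"
    proof -
      have tnz: "real t \<noteq> 0" using assms by simp
      show ?thesis using tnz by (simp add: divide_simps) (simp add: algebra_simps)
    qed
    finally show ?thesis .
  qed
  ultimately show ?case unfolding Rs by simp
qed

definition TT :: "nat \<Rightarrow> nat \<Rightarrow> real" where
  "TT u t = (\<Sum>i=0..u. real (2* u choose (2* i)) * Qf u t i) / qq t - 1"

definition DD :: "nat \<Rightarrow> real" where
  "DD u = (\<Sum>i=1..u. real (2* u choose (2* i)) * fact i)"

lemma TT_bound:
  assumes "t \<ge> 2" "u \<ge> 1"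
  shows "\<bar>TT u t\<bar> \<le> (5/4)^u * (real u + DD u) / (2 * real t)"
proof -
  have qt: "qq t > 0" by (rule qq_pos)
  have rb: "1 \<le> qq (t+u) / qq t" "qq (t+u) / qq t \<le> (5/4)^u" "qq (t+u) / qq t - 1 \<le> real u * (5/4)^u / (2 * real t)"
    using ratio_bound[OF assms(1), of u] by auto
  have split: "(\<Sum>i=0..u. real (2* u choose (2* i)) * Qf u t i) = qq (t+u) + (\<Sum>i=1..u. real (2* u choose (2* i)) * Qf u t i)"
    using assms(2) by (simp add: sum.atLeast_Suc_atMost Qf_0)
  have "\<bar>\<Sum>i=1..u. real (2* u choose (2* i)) * Qf u t i\<bar> \<le> (\<Sum>i=1..u. real (2* u choose (2* i)) * (qq (t+u) * fact i / (2 * real t)))"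
  proof -
    have "\<bar>\<Sum>i=1..u. real (2* u choose (2* i)) * Qf u t i\<bar> \<le> (\<Sum>i=1..u. \<bar>real (2* u choose (2* i)) * Qf u t i\<bar>)"
      by (rule sum_abs)
    also have "\<dots> \<le> (\<Sum>i=1..u. real (2* u choose (2* i)) * (qq (t+u) * fact i / (2 * real t)))"
    proof (rule sum_mono)
      fix i assume "i \<in> {1..u}"
      then have q: "\<bar>Qf u t i\<bar> \<le> qq (t+u) * fact i / (2 * real t)"
        using Qf_bound[of i u t] assms by auto
      have ab: "\<bar>real (2* u choose (2* i))\<bar> = real (2* u choose (2* i))" by simp
      show "\<bar>real (2* u choose (2* i)) * Qf u t i\<bar> \<le> real (2* u choose (2* i)) * (qq (t+u) * fact i / (2 * real t))"
        unfolding abs_mult ab by (rule mult_left_mono[OF q]) simp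
    qed
    finally show ?thesis .
  qed
  also have "\<dots> = qq (t+u) * DD u / (2 * real t)"
    unfolding DD_def by (simp add: sum_distrib_left sum_divide_distrib algebra_simps)
  finally have sb: "\<bar>\<Sum>i=1..u. real (2* u choose (2* i)) * Qf u t i\<bar> \<le> qq (t+u) * DD u / (2 * real t)" .
  have tte: "TT u t = (qq (t+u) / qq t - 1) + (\<Sum>i=1..u. real (2* u choose (2* i)) * Qf u t i) / qq t"
    unfolding TT_def split using qt by (simp add: field_simps)
  have "\<bar>TT u t\<bar> \<le> \<bar>qq (t+u) / qq t - 1\<bar> + \<bar>(\<Sum>i=1..u. real (2* u choose (2* i)) * Qf u t i) / qq t\<bar>"
    unfolding tte by (rule abs_triangle_ineq)
  also have "\<dots> = (qq (t+u) / qq t - 1) + \<bar>\<Sum>i=1..u. real (2* u choose (2* i)) * Qf u t i\<bar> / qq t"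
    using rb qt by simp
  also have "\<dots> \<le> real u * (5/4)^u / (2 * real t) + (qq (t+u) / qq t) * DD u / (2 * real t)"
  proof (rule add_mono)
    show "qq (t+u) / qq t - 1 \<le> real u * (5/4)^u / (2 * real t)" using rb by simp
    have "\<bar>\<Sum>i=1..u. real (2* u choose (2* i)) * Qf u t i\<bar> / qq t \<le> (qq (t+u) * DD u / (2 * real t)) / qq t"
      using sb qt by (intro divide_right_mono) auto
    also have "\<dots> = (qq (t+u) / qq t) * DD u / (2 * real t)" by simp
    finally show "\<bar>\<Sum>i=1..u. real (2* u choose (2* i)) * Qf u t i\<bar> / qq t \<le> (qq (t+u) / qq t) * DD u / (2 * real t)" .
  qed
  also have "\<dots> \<le> real u * (5/4)^u / (2 * real t) + (5/4)^u * DD u / (2 * real t)"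
  proof -
    have "DD u \<ge> 0" unfolding DD_def by (intro sum_nonneg) auto
    then show ?thesis using rb assms by (intro add_mono order_refl divide_right_mono mult_right_mono) auto
  qed
  also have "\<dots> = (5/4)^u * (real u + DD u) / (2 * real t)"
  proof -
    have e: "(5/4::real)^u * (real u + DD u) = real u * (5/4)^u + (5/4)^u * DD u" by (simp add: algebra_simps)
    show ?thesis by (simp only: e add_divide_distrib)
  qed
  finally show ?thesis .
qed

lemma alpha_pow: "alpha^(2* k) = (pi^2/36)^k"
  unfolding alpha_def by (simp add: power_mult power_divide)

lemma helper_div: "(b::real) \<noteq> 0 \<Longrightarrow> c \<noteq> 0 \<Longrightarrow> X / b = c * (X / (b * c))"
  by (simp add: field_simps)

lemma cc_0: "cc 0 = 1" by (simp add: cc_def)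

lemma cosh_series: "(\<lambda>k. cc (Suc k)) sums (cosh alpha - 1)"
proof -
  let ?f = "\<lambda>n. if even n then alpha ^ n /\<^sub>R fact n else (0::real)"
  have sm: "strict_mono (\<lambda>k::nat. 2* k)" by (auto simp: strict_mono_def)
  have z: "\<And>n. n \<notin> range (\<lambda>k::nat. 2* k) \<Longrightarrow> ?f n = 0"
  proof -
    fix n :: nat assume "n \<notin> range (\<lambda>k::nat. 2* k)"
    then have "\<not> even n" by (metis evenE rangeI)
    then show "?f n = 0" by simp
  qed
  have r: "(\<lambda>k. ?f (2* k)) sums cosh alpha \<longleftrightarrow> ?f sums cosh alpha"
    by (rule sums_mono_reindex[OF sm z])
  have "(\<lambda>k. ?f (2* k)) sums cosh alpha"
    using r cosh_converges[of alpha] by blast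
  moreover have "\<And>k. ?f (2* k) = cc k" unfolding cc_def alpha_pow[symmetric] by (simp add: field_simps)
  ultimately have "cc sums cosh alpha" by simp
  then have "(\<lambda>k. cc (Suc k)) sums (cosh alpha - cc 0)"
    using sums_Suc_iff[of cc "cosh alpha - cc 0"] by simp
  then show ?thesis by (simp add: cc_0)
qed

lemma sinh_series: "(\<lambda>k. 2 * real (Suc k) * cc (Suc k)) sums (alpha * sinh alpha)"
proof -
  let ?f = "\<lambda>n. if even n then 0 else alpha ^ n /\<^sub>R fact n :: real"
  have sm: "strict_mono (\<lambda>k::nat. 2* k+1)" by (auto simp: strict_mono_def)
  have z: "\<And>n. n \<notin> range (\<lambda>k::nat. 2* k+1) \<Longrightarrow> ?f n = 0"
  proof -
    fix n :: nat assume "n \<notin> range (\<lambda>k::nat. 2* k+1)"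
    then have "even n" by (metis oddE rangeI)
    then show "?f n = 0" by simp
  qed
  have r: "(\<lambda>k. ?f (2* k+1)) sums sinh alpha \<longleftrightarrow> ?f sums sinh alpha"
    by (rule sums_mono_reindex[OF sm z])
  have "(\<lambda>k. ?f (2* k+1)) sums sinh alpha"
    using r sinh_converges[of alpha] by blast
  then have "(\<lambda>k. alpha * ?f (2* k+1)) sums (alpha * sinh alpha)" by (rule sums_mult)
  moreover have "alpha * ?f (2* k+1) = 2 * real (Suc k) * cc (Suc k)" for k
  proof -
    have f: "(fact (2 * Suc k)::real) = fact (2* k+1) * (2 * real (Suc k))"
    proof -
      have "(fact (2 * Suc k)::real) = fact (2* k+1) * (real (2* k+1) + 1)" by (rule fact1') simp
      then show ?thesis by simp
    qed
    have p: "alpha * alpha^(2* k+1) = (pi^2/36)^(Suc k)"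
      using alpha_pow[of "Suc k"] by (simp add: power_Suc[symmetric] del: power_Suc)
    have "alpha * ?f (2* k+1) = alpha * alpha^(2* k+1) / fact (2* k+1)" by (simp add: field_simps)
    also have "\<dots> = 2 * real (Suc k) * cc (Suc k)" unfolding p cc_def f
      by (rule helper_div) simp_all
    finally show ?thesis .
  qed
  ultimately show ?thesis by simp
qed

lemma x_bounds: "0 < pi^2/36" "pi^2/36 \<le> (0.27416::real)"
proof -
  show "0 < pi^2/36" by simp
  have h: "pi \<le> 3.1416" "0 \<le> pi" using pi_approx(2) pi_gt_zero by simp_all
  have "pi * pi \<le> 3.1416 * (3.1416::real)" using mult_mono[OF h(1) h(1)] h by simp
  then show "pi^2/36 \<le> (0.27416::real)" by (simp add: power2_eq_square)
qed

lemma DD_1: "DD 1 = 1" by (simp add: DD_def)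
lemma DD_1': "DD (Suc 0) = 1" using DD_1 by simp
lemma c42: "(4::nat) choose 2 = 6" by code_simp

lemma DD_2: "DD 2 = 8"
proof -
  have e: "{1..2::nat} = {1,2}" by auto
  have "DD 2 = real (2*2 choose (2*1)) * fact 1 + real (2*2 choose (2*2)) * fact 2"
    unfolding DD_def e by simp
  also have "\<dots> = 8" by (simp add: c42)
  finally show ?thesis .
qed

lemma row_even: "(\<Sum>i=1..u. (2* u choose (2* i))) \<le> (2::nat)^(2* u)"
proof -
  have "(\<Sum>i=1..u. (2* u choose (2* i))) = (\<Sum>j\<in>(\<lambda>i. 2* i)`{1..u}. (2* u choose j))"
    by (simp add: sum.reindex inj_on_def)
  also have "\<dots> \<le> (\<Sum>j\<le>2* u. (2* u choose j))"
    by (rule sum_mono2) auto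
  also have "\<dots> = 2^(2* u)" by (rule choose_row_sum)
  finally show ?thesis .
qed

lemma DD_le: "DD u \<le> 4^u * fact u"
proof -
  have "DD u \<le> (\<Sum>i=1..u. real (2* u choose (2* i)) * fact u)"
    unfolding DD_def by (intro sum_mono mult_left_mono) (auto intro: fact_mono)
  also have "\<dots> = real (\<Sum>i=1..u. (2* u choose (2* i))) * fact u"
    by (simp add: sum_distrib_right)
  also have "\<dots> \<le> real ((2::nat)^(2* u)) * fact u"
    using row_even[of u] by (intro mult_right_mono) (simp_all only: of_nat_le_iff, simp)
  also have "real ((2::nat)^(2* u)) = (4::real)^u" by (simp add: power_mult)
  finally show ?thesis .
qed

definition gg :: "nat \<Rightarrow> real" where "gg u = (5 * (pi^2/36))^u * fact u / fact (2* u)"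

lemma gg_bound: "u \<ge> 3 \<Longrightarrow> gg u \<le> 0.045 * (1/2)^(u-3)"
proof (induction u rule: dec_induct)
  case base
  define x where "x = pi^2/36"
  have x: "x \<le> (0.27416::real)" "0 < x" using x_bounds unfolding x_def by auto
  have x3: "x^3 \<le> (0.27416::real)^3" by (rule power_mono) (use x in auto)
  also have "(0.27416::real)^3 \<le> 0.021" by (simp add: power3_eq_cube)
  finally have x3: "x^3 \<le> 0.021" .
  have "gg 3 = (5* x)^3 * fact 3 / fact 6" unfolding gg_def x_def by simp
  also have "\<dots> = 125 * x^3 * (6 / 720)" by (simp add: power_mult_distrib fact_numeral)
  finally show ?case using x3 by simp
next
  case (step k)
  let ?x = "pi^2/36"
  have x: "?x \<le> (0.27416::real)" "0 < ?x" using x_bounds by auto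
  have f: "(fact (2 * Suc k)::real) = fact (2* k) * (real (2* k)+1) * (real (2* k)+2)"
    by (rule fact2') simp
  have e: "gg (Suc k) = gg k * (5 * ?x * (real k + 1) / ((real (2* k)+1) * (real (2* k)+2)))"
    unfolding gg_def f by (simp add: field_simps)
  have r: "5 * ?x * (real k + 1) / ((real (2* k)+1) * (real (2* k)+2)) \<le> 1/2"
  proof -
    have "5 * ?x * (real k + 1) \<le> 1/2 * ((real (2* k)+1) * (real (2* k)+2))"
    proof -
      have "5 * ?x \<le> real (2* k) + 1" using x step.hyps by simp
      then have "5 * ?x * (real k + 1) \<le> (real (2* k) + 1) * (real k + 1)" by (rule mult_right_mono) simp
      also have "\<dots> = 1/2 * ((real (2* k)+1) * (real (2* k)+2))" by (simp add: algebra_simps)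
      finally show ?thesis .
    qed
    then show ?thesis by (simp add: divide_simps)
  qed
  have g0: "gg k \<ge> 0" unfolding gg_def using x by simp
  have "gg (Suc k) \<le> gg k * (1/2)" unfolding e using r g0 by (rule mult_left_mono)
  also have "\<dots> \<le> 0.045 * (1/2)^(k-3) * (1/2)" using step.IH by simp
  also have "\<dots> = 0.045 * (1/2)^(Suc k - 3)"
  proof -
    have "Suc k - 3 = Suc (k - 3)" using step.hyps by simp
    then show ?thesis by simp
  qed
  finally show ?case .
qed

lemma beta_bound: "u \<ge> 1 \<Longrightarrow> cc u * (5/4)^u * (real u + DD u) / 2 \<le> 0.18 * (1/2)^(u-1)"
proof -
  assume u: "u \<ge> 1"
  let ?x = "pi^2/36"
  have x: "?x \<le> (0.27416::real)" "0 < ?x" using x_bounds by auto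
  consider "u = 1" | "u = 2" | "u \<ge> 3" using u by linarith
  then show ?thesis
  proof cases
    case 1
    define y where "y = pi^2/36"
    have y: "y \<le> 0.27416" using x unfolding y_def by simp
    have "cc u * (5/4)^u * (real u + DD u) / 2 = 5/8 * y" unfolding 1 cc_def y_def[symmetric] by (simp add: DD_1 DD_1')
    then show ?thesis using y 1 by simp
  next
    case 2
    define y where "y = pi^2/36"
    have y: "y \<le> 0.27416" "0 < y" using x unfolding y_def by simp_all
    have y2: "y^2 \<le> 0.08" using mult_mono[OF y(1) y(1)] y by (simp add: power2_eq_square)
    have "cc u * (5/4)^u * (real u + DD u) / 2 = y^2 / 24 * (25/16) * 10 / 2" unfolding 2 cc_def y_def[symmetric] by (simp add: DD_2 fact_numeral power2_eq_square)
    then show ?thesis using y2 2 by simp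
  next
    case 3
    have a: "real u + DD u \<le> 2 * (4^u * fact u)"
    proof -
      have "real u \<le> 2^u" using less_exp[of u] by (metis less_imp_le of_nat_le_iff of_nat_numeral of_nat_power)
      also have "(2::real)^u \<le> 4^u" by (rule power_mono) auto
      also have "(4::real)^u \<le> 4^u * fact u" by simp
      finally show ?thesis using DD_le[of u] by simp
    qed
    have cpos: "cc u * (5/4)^u \<ge> 0" unfolding cc_def by simp
    have "cc u * (5/4)^u * (real u + DD u) / 2 \<le> cc u * (5/4)^u * (2 * (4^u * fact u)) / 2"
      using mult_left_mono[OF a cpos] by (simp add: divide_right_mono)
    also have "\<dots> = gg u" unfolding cc_def gg_def by (simp add: field_simps power_mult_distrib)
    also have "\<dots> \<le> 0.045 * (1/2)^(u-3)" using 3 by (rule gg_bound)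
    also have "\<dots> = 0.18 * (1/2)^(u-1)"
    proof -
      have "u - 1 = (u - 3) + 2" using 3 by simp
      then show ?thesis by (simp add: power_add)
    qed
    finally show ?thesis .
  qed
qed

lemma TT_LL: "TT u t = (LL u t + 2 * real u) / qq t - 1"
  by (simp add: TT_def LL_def)

theorem mainTheorem12:
  fixes t :: nat
  assumes "t \<ge> 2"
  shows "- 71 / (100 * real t) <
           S3 t / ((-3/2::real) gchoose t) + (-1)^t / ((-3/2::real) gchoose t) * alpha * sinh alpha
             + 1 - cosh alpha
         \<and> S3 t / ((-3/2::real) gchoose t) + (-1)^t / ((-3/2::real) gchoose t) * alpha * sinh alpha
             + 1 - cosh alpha < 12 / (25 * real t)"
proof -
  define V where "V = S3 t / ((-3/2::real) gchoose t) + (-1)^t / ((-3/2::real) gchoose t) * alpha * sinh alpha + 1 - cosh alpha"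
  define X where "X = (\<Sum>u=1..t. cc u * LL u t)"
  define w where "w = (\<lambda>k. cc (Suc k) * TT (Suc k) t)"
  have qt: "qq t > 0" by (rule qq_pos)
  have tpos: "real t > 0" using assms by simp
  have sgn: "((-1::real)^t)^2 = 1" by (simp add: power_mult[symmetric])
  have bq: "((-3/2::real) gchoose t) = (-1)^t * qq t"
  proof -
    have "qq t * (-1)^t = ((-3/2::real) gchoose t) * ((-1)^t)^2" unfolding qq_def by (simp add: power2_eq_square)
    then have "qq t * (-1)^t = ((-3/2::real) gchoose t)" using sgn by simp
    then show ?thesis by (simp add: mult.commute)
  qed
  have sn: "(-1::real)^t \<noteq> 0" by simp
  have V_eq: "V = X / qq t + alpha * sinh alpha / qq t - (cosh alpha - 1)"
    unfolding V_def X_def bq S3_eq using sn qt by (simp add: field_simps)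
  have A: "(\<lambda>k. cc (Suc k) * LL (Suc k) t / qq t) sums (X / qq t)"
  proof -
    have "(\<lambda>k. cc (Suc k) * LL (Suc k) t / qq t) sums (\<Sum>k\<in>{..<t}. cc (Suc k) * LL (Suc k) t / qq t)"
      by (rule sums_finite) (auto simp: LL_zero)
    moreover have "(\<Sum>k\<in>{..<t}. cc (Suc k) * LL (Suc k) t / qq t) = X / qq t"
      unfolding X_def sum_divide_distrib by (rule sum_bounds_lt_plus1)
    ultimately show ?thesis by simp
  qed
  have B: "(\<lambda>k. 2 * real (Suc k) * cc (Suc k) / qq t) sums (alpha * sinh alpha / qq t)"
    using sinh_series by (rule sums_divide)
  have C: "(\<lambda>k. cc (Suc k)) sums (cosh alpha - 1)" by (rule cosh_series)
  have "(\<lambda>k. cc (Suc k) * LL (Suc k) t / qq t + 2 * real (Suc k) * cc (Suc k) / qq t - cc (Suc k)) sums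
      (X / qq t + alpha * sinh alpha / qq t - (cosh alpha - 1))"
    by (intro sums_diff sums_add A B C)
  moreover have "(\<lambda>k. cc (Suc k) * LL (Suc k) t / qq t + 2 * real (Suc k) * cc (Suc k) / qq t - cc (Suc k)) = w"
    unfolding w_def TT_LL using qt by (auto simp: field_simps)
  ultimately have ws: "w sums V" unfolding V_eq by simp
  define M where "M = (\<lambda>k. (0.18 / real t) * (1/2)^k)"
  have Ms: "M sums (0.36 / real t)"
  proof -
    have "(\<lambda>k. (1/2::real)^k) sums (1 / (1 - 1/2))" by (rule geometric_sums) simp
    then have "(\<lambda>k. (0.18 / real t) * (1/2::real)^k) sums ((0.18 / real t) * (1 / (1 - 1/2)))" by (rule sums_mult)
    then show ?thesis unfolding M_def by simp
  qed
  have wM: "\<bar>w k\<bar> \<le> M k" for k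
  proof -
    have cpos: "cc (Suc k) \<ge> 0" unfolding cc_def by simp
    have "\<bar>w k\<bar> = cc (Suc k) * \<bar>TT (Suc k) t\<bar>" unfolding w_def using cpos by (simp add: abs_mult)
    also have "\<dots> \<le> cc (Suc k) * ((5/4)^Suc k * (real (Suc k) + DD (Suc k)) / (2 * real t))"
      using TT_bound[OF assms, of "Suc k"] cpos by (intro mult_left_mono) auto
    also have "\<dots> = (cc (Suc k) * (5/4)^Suc k * (real (Suc k) + DD (Suc k)) / 2) / real t"
      by (simp add: field_simps)
    also have "\<dots> \<le> (0.18 * (1/2)^(Suc k - 1)) / real t"
      using beta_bound[of "Suc k"] tpos by (intro divide_right_mono) auto
    also have "\<dots> = M k" unfolding M_def by simp
    finally show ?thesis .
  qed
  have sM: "summable M" using Ms by (rule sums_summable)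
  have sw: "summable w" using ws by (rule sums_summable)
  have up: "V \<le> 0.36 / real t"
  proof -
    have "suminf w \<le> suminf M" using wM sw sM by (intro suminf_le) (auto simp: abs_le_iff)
    then show ?thesis using sums_unique[OF ws] sums_unique[OF Ms] by simp
  qed
  have lo: "- (0.36 / real t) \<le> V"
  proof -
    have "(\<lambda>k. - M k) sums (- (0.36 / real t))" using Ms by (rule sums_minus)
    then have "suminf (\<lambda>k. - M k) \<le> suminf w" using wM sw
    proof (intro suminf_le)
      fix n show "- M n \<le> w n" using wM[of n] by (simp add: abs_le_iff)
    qed (auto simp: sums_summable)
    then show ?thesis using sums_unique[OF ws] sums_unique[OF \<open>(\<lambda>k. - M k) sums _\<close>] by simp
  qed
  have "- 71 / (100 * real t) < - (0.36 / real t)" using tpos by (simp add: divide_simps)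
  moreover have "0.36 / real t < 12 / (25 * real t)" using tpos by (simp add: divide_simps)
  ultimately show ?thesis using up lo unfolding V_def by linarith
qed

end
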